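(* Let $n\ge2$ and let $T_1,\dots,T_n$ be distinct triangles in $E$, and let $S$ be the set of vertices of the polygon $\bigcap_{i=1}^nT_i$. Then $|S|=3n$.
   Context: For $d>0$ let $C_d=\{(x,y)\in\mathbb{R}^2: x^2+y^2\le d\}$, and $C=C_1$. $E$ is the set of all equilateral triangles $T\subseteq C$ whose vertices lie on the boundary of $C$. *)

theory Defs
  imports "HOL-Analysis.Analysis"
begin

text \<open>The closed disc of radius squared d in the plane (points as pairs of reals).\<close>
definition Cd :: "real \<Rightarrow> (real \<times> real) set" where
  "Cd d = {(x, y). x\<^sup>2 + y\<^sup>2 \<le> d}"

definition C :: "(real \<times> real) set" where
  "C = Cd 1"

definition E :: "(real \<times> real) set set" where
  "E = {T. \<exists>a b c. T = convex hull {a, b, c} \<and> a \<noteq> b \<and>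
          dist a b = dist b c \<and> dist b c = dist c a \<and>
          T \<subseteq> C \<and> a \<in> frontier C \<and> b \<in> frontier C \<and> c \<in> frontier C}"

definition polygon_vertices :: "(real \<times> real) set \<Rightarrow> (real \<times> real) set" where
  "polygon_vertices P = {p. p extreme_point_of P}"

end

theory Submission
  imports Defs
begin

lemma inner_xy: "inner (z::real\<times>real) w = fst z * fst w + snd z * snd w"
  by (cases z; cases w) (simp add: inner_prod_def)

lemma norm_sq_xy: "(norm (z::real\<times>real))^2 = (fst z)^2 + (snd z)^2"
  by (cases z) (simp add: norm_prod_def)

lemma norm1_xy: "norm (z::real\<times>real) = 1 \<longleftrightarrow> (fst z)^2 + (snd z)^2 = 1"
  by (metis norm_ge_zero norm_sq_xy one_power2 power2_eq_iff_nonneg zero_le_one)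

lemma lagr: fixes p1 p2 x1 x2 :: real shows "(p1^2+p2^2)*(x1^2+x2^2) = (p1*x1+p2*x2)^2 + (p1*x2 - p2*x1)^2"
  by (simp add: power2_eq_square algebra_simps)

lemma sq_eq_cases: fixes X Y :: real shows "X^2 = Y^2 \<Longrightarrow> X - Y = 0 \<or> X + Y = 0"
proof - assume "X^2 = Y^2" hence "(X-Y)*(X+Y) = 0" by (simp add: power2_eq_square algebra_simps) thus ?thesis by simp qed

definition cr :: "real\<times>real \<Rightarrow> real\<times>real \<Rightarrow> real" where
  "cr p x = fst p * snd x - snd p * fst x"

lemma uniq_sign:
  fixes p x y :: "real\<times>real"
  assumes "norm x = 1" "norm y = 1" "inner p x = c" "inner p y = c" "c \<noteq> 0"
    "0 \<le> cr p x * cr p y"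
  shows "x = y"
proof -
  obtain p1 p2 where p: "p = (p1,p2)" by (cases p)
  obtain x1 x2 where x: "x = (x1,x2)" by (cases x)
  obtain y1 y2 where y: "y = (y1,y2)" by (cases y)
  have hx: "x1^2+x2^2 = 1" using assms(1) x by (simp add: norm1_xy)
  have hy: "y1^2+y2^2 = 1" using assms(2) y by (simp add: norm1_xy)
  have cx: "p1*x1+p2*x2 = c" using assms(3) p x by (simp add: inner_xy)
  have cy: "p1*y1+p2*y2 = c" using assms(4) p y by (simp add: inner_xy)
  define X where "X = p1*x2 - p2*x1"
  define Y where "Y = p1*y2 - p2*y1"
  have XY: "0 \<le> X*Y" using assms(6) p x y by (simp add: cr_def X_def Y_def)
  have lx: "(p1^2+p2^2)*(x1^2+x2^2) = (p1*x1+p2*x2)^2 + X^2" unfolding X_def by (rule lagr)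
  have ly: "(p1^2+p2^2)*(y1^2+y2^2) = (p1*y1+p2*y2)^2 + Y^2" unfolding Y_def by (rule lagr)
  have "X^2 = Y^2" using lx ly unfolding hx hy cx cy by simp
  hence "X - Y = 0 \<or> X + Y = 0" by (rule sq_eq_cases)
  hence "X = Y"
  proof
    assume "X - Y = 0" thus ?thesis by simp
  next
    assume "X + Y = 0" hence "Y = -X" by simp
    with XY have "X*X \<le> 0" by simp
    hence "X = 0" by (auto simp add: mult_le_0_iff)
    thus ?thesis using \<open>Y = -X\<close> by simp
  qed
  define d1 where "d1 = x1 - y1"
  define d2 where "d2 = x2 - y2"
  have e1: "p1*d1 + p2*d2 = 0" using cx cy unfolding d1_def d2_def by (simp add: algebra_simps)
  have e2: "p1*d2 - p2*d1 = 0" using \<open>X = Y\<close> unfolding d1_def d2_def X_def Y_def by (simp add: algebra_simps)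
  have ld: "(p1^2+p2^2)*(d1^2+d2^2) = (p1*d1+p2*d2)^2 + (p1*d2 - p2*d1)^2" by (rule lagr)
  have pn: "p1^2+p2^2 \<noteq> 0"
  proof
    assume "p1^2+p2^2 = 0" hence "p1 = 0" "p2 = 0" by (simp_all add: sum_power2_eq_zero_iff)
    with cx assms(5) show False by simp
  qed
  have "d1^2+d2^2 = 0" using ld pn unfolding e1 e2 by (simp del: sum_power2_eq_zero_iff)
  hence "d1 = 0" "d2 = 0" by (simp_all add: sum_power2_eq_zero_iff)
  thus ?thesis using x y d1_def d2_def by simp
qed

lemma subsing_card: "(\<forall>x\<in>A. \<forall>y\<in>A. x = y) \<Longrightarrow> finite A \<and> card A \<le> 1"
proof -
  assume h: "\<forall>x\<in>A. \<forall>y\<in>A. x = y"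
  hence "A = {} \<or> (\<exists>a. A = {a})" by blast
  hence f: "finite A" by auto
  thus ?thesis using h card_le_Suc0_iff_eq[OF f] by simp
qed

lemma circ_line_le2:
  fixes p :: "real\<times>real" assumes "c \<noteq> 0"
  shows "finite {x. norm x = 1 \<and> inner p x = c} \<and> card {x. norm x = 1 \<and> inner p x = c} \<le> 2"
proof -
  let ?S = "{x. norm x = 1 \<and> inner p x = c}"
  let ?S1 = "{x\<in>?S. 0 \<le> cr p x}"
  let ?S2 = "{x\<in>?S. cr p x < 0}"
  have "\<forall>x\<in>?S1. \<forall>y\<in>?S1. x = y"
  proof (intro ballI)
    fix x y assume "x \<in> ?S1" "y \<in> ?S1"
    thus "x = y" by (intro uniq_sign[OF _ _ _ _ assms]) auto
  qed
  hence 1: "finite ?S1 \<and> card ?S1 \<le> 1" by (rule subsing_card)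
  have "\<forall>x\<in>?S2. \<forall>y\<in>?S2. x = y"
  proof (intro ballI)
    fix x y assume "x \<in> ?S2" "y \<in> ?S2"
    thus "x = y" by (intro uniq_sign[OF _ _ _ _ assms]) (auto intro: less_imp_le simp: zero_le_mult_iff)
  qed
  hence 2: "finite ?S2 \<and> card ?S2 \<le> 1" by (rule subsing_card)
  have eq: "?S = ?S1 \<union> ?S2" by auto
  have "card (?S1 \<union> ?S2) \<le> card ?S1 + card ?S2" by (rule card_Un_le)
  thus ?thesis using 1 2 eq by simp
qed

lemma gram2: fixes a1 a2 b1 b2 c1 c2 :: real
  shows "(a1*a1+a2*a2)*((b1*b1+b2*b2)*(c1*c1+c2*c2) - (b1*c1+b2*c2)^2)
       - (a1*b1+a2*b2)*((a1*b1+a2*b2)*(c1*c1+c2*c2) - (b1*c1+b2*c2)*(a1*c1+a2*c2))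
       + (a1*c1+a2*c2)*((a1*b1+a2*b2)*(b1*c1+b2*c2) - (b1*b1+b2*b2)*(a1*c1+a2*c2)) = 0"
  by algebra

lemma dist_sq_xy: "(dist (a::real\<times>real) b)^2 = (fst a - fst b)^2 + (snd a - snd b)^2"
  by (simp add: dist_norm norm_sq_xy)

lemma tri_facts:
  fixes a b c :: "real\<times>real"
  assumes "norm a = 1" "norm b = 1" "norm c = 1" "a \<noteq> b"
    "dist a b = dist b c" "dist b c = dist c a"
  shows "a + b + c = 0 \<and> inner a b = -1/2 \<and> inner b c = -1/2 \<and> inner c a = -1/2"
proof -
  obtain a1 a2 where a: "a = (a1,a2)" by (cases a)
  obtain b1 b2 where b: "b = (b1,b2)" by (cases b)
  obtain c1 c2 where c: "c = (c1,c2)" by (cases c)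
  have ha: "a1*a1+a2*a2 = 1" using assms(1) a by (simp add: norm1_xy power2_eq_square)
  have hb: "b1*b1+b2*b2 = 1" using assms(2) b by (simp add: norm1_xy power2_eq_square)
  have hc: "c1*c1+c2*c2 = 1" using assms(3) c by (simp add: norm1_xy power2_eq_square)
  have d1: "(a1-b1)^2+(a2-b2)^2 = (b1-c1)^2+(b2-c2)^2"
    using arg_cong[OF assms(5), of "\<lambda>x. x^2"] a b c by (simp add: dist_sq_xy)
  have d2: "(b1-c1)^2+(b2-c2)^2 = (c1-a1)^2+(c2-a2)^2"
    using arg_cong[OF assms(6), of "\<lambda>x. x^2"] a b c by (simp add: dist_sq_xy)
  define t where "t = a1*b1+a2*b2"
  have e1: "(a1-b1)^2+(a2-b2)^2 = 2 - 2*t" using ha hb unfolding t_def by (simp add: power2_eq_square algebra_simps)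
  have e2: "(b1-c1)^2+(b2-c2)^2 = 2 - 2*(b1*c1+b2*c2)" using hc hb by (simp add: power2_eq_square algebra_simps)
  have e3: "(c1-a1)^2+(c2-a2)^2 = 2 - 2*(c1*a1+c2*a2)" using hc ha by (simp add: power2_eq_square algebra_simps)
  have tbc: "b1*c1+b2*c2 = t" using d1 e1 e2 by simp
  have tca: "a1*c1+a2*c2 = t" using d1 d2 e1 e3 tbc by (simp add: algebra_simps)
  have t1: "t \<noteq> 1"
  proof
    assume "t = 1"
    hence "(a1-b1)^2+(a2-b2)^2 = 0" using e1 by simp
    hence "a1 = b1" "a2 = b2" by (simp_all add: sum_power2_eq_zero_iff)
    thus False using assms(4) a b by simp
  qed
  have g: "1*(1*1 - t^2) - t*(t*1 - t*t) + t*(t*t - 1*t) = 0"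
    using gram2[of a1 a2 b1 b2 c1 c2] unfolding ha hb hc tbc tca t_def[symmetric] .
  hence "(1-t)^2*(1+2*t) = 0" by (simp add: power2_eq_square algebra_simps)
  hence tt: "t = -1/2" using t1 by simp
  have s1: "(a1+b1+c1)^2+(a2+b2+c2)^2 = 0"
  proof -
    have "(a1+b1+c1)^2+(a2+b2+c2)^2 = (a1*a1+a2*a2)+(b1*b1+b2*b2)+(c1*c1+c2*c2)
       + 2*(a1*b1+a2*b2) + 2*(b1*c1+b2*c2) + 2*(a1*c1+a2*c2)" by (simp add: power2_eq_square algebra_simps)
    also have "\<dots> = 0" unfolding ha hb hc tbc tca t_def[symmetric] tt by simp
    finally show ?thesis .
  qed
  hence "a1+b1+c1 = 0" "a2+b2+c2 = 0" by (simp_all add: sum_power2_eq_zero_iff)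
  thus ?thesis using a b c tt tbc tca unfolding t_def by (simp add: inner_xy algebra_simps zero_prod_def)
qed

lemma perp2:
  fixes y a b :: "real\<times>real"
  assumes "inner y a = 0" "inner y b = 0" "cr a b \<noteq> 0"
  shows "y = 0"
proof -
  obtain a1 a2 where a: "a = (a1,a2)" by (cases a)
  obtain b1 b2 where b: "b = (b1,b2)" by (cases b)
  obtain y1 y2 where y: "y = (y1,y2)" by (cases y)
  have h1: "y1*a1+y2*a2 = 0" using assms(1) a b y by (simp add: inner_xy)
  have h2: "y1*b1+y2*b2 = 0" using assms(2) a b y by (simp add: inner_xy)
  have k: "a1*b2 - a2*b1 \<noteq> 0" using assms(3) a b by (simp add: cr_def)
  have "y1*(a1*b2 - a2*b1) = b2*(y1*a1+y2*a2) - a2*(y1*b1+y2*b2)" by (simp add: algebra_simps)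
  hence "y1 = 0" using h1 h2 k by simp
  have "y2*(a1*b2 - a2*b1) = a1*(y1*b1+y2*b2) - b1*(y1*a1+y2*a2)" by (simp add: algebra_simps)
  hence "y2 = 0" using h1 h2 k by simp
  show ?thesis using y \<open>y1 = 0\<close> \<open>y2 = 0\<close> by (simp add: zero_prod_def)
qed

lemma cr_nz:
  fixes a b :: "real\<times>real"
  assumes "norm a = 1" "norm b = 1" "inner a b = -1/2"
  shows "cr a b \<noteq> 0"
proof -
  have "((fst a)^2+(snd a)^2)*((fst b)^2+(snd b)^2) = (fst a * fst b + snd a * snd b)^2 + (cr a b)^2"
    unfolding cr_def by (rule lagr)
  hence "1 = 1/4 + (cr a b)^2" using assms by (simp add: norm1_xy inner_xy power2_eq_square)
  thus ?thesis by auto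
qed

lemma conv_hp: "convex {x::real\<times>real. inner x u \<le> c}"
  using convex_halfspace_le[of u c] by (simp add: inner_commute)

lemma tri_halfplanes:
  fixes a b c :: "real\<times>real"
  assumes "norm a = 1" "norm b = 1" "norm c = 1"
    "a + b + c = 0" "inner a b = -1/2" "inner b c = -1/2" "inner c a = -1/2"
  shows "convex hull {a,b,c} = {x. \<forall>u\<in>{-a,-b,-c}. inner x u \<le> 1/2}"
proof
  have aa: "inner a a = 1" "inner b b = 1" "inner c c = 1" using assms(1-3)
    by (simp_all add: dot_square_norm)
  have sym: "inner b a = -1/2" "inner c b = -1/2" "inner a c = -1/2"
    using assms(5-7) by (simp_all add: inner_commute)
  show "convex hull {a,b,c} \<subseteq> {x. \<forall>u\<in>{-a,-b,-c}. inner x u \<le> 1/2}"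
  proof (rule hull_minimal)
    show "{a,b,c} \<subseteq> {x. \<forall>u\<in>{-a,-b,-c}. inner x u \<le> 1/2}"
      using aa sym assms(5-7) by auto
    have "convex (\<Inter>u\<in>{-a,-b,-c}. {x. inner x u \<le> 1/2})"
      by (intro convex_INT ballI conv_hp)
    moreover have "(\<Inter>u\<in>{-a,-b,-c}. {x. inner x u \<le> 1/2}) = {x. \<forall>u\<in>{-a,-b,-c}. inner x u \<le> 1/2}"
      by blast
    ultimately show "convex {x. \<forall>u\<in>{-a,-b,-c}. inner x u \<le> (1/2::real)}" by simp
  qed
  show "{x. \<forall>u\<in>{-a,-b,-c}. inner x u \<le> 1/2} \<subseteq> convex hull {a,b,c}"
  proof
    fix x assume "x \<in> {x. \<forall>u\<in>{-a,-b,-c}. inner x u \<le> 1/2}"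
    hence xa: "inner x a \<ge> -1/2" and xb: "inner x b \<ge> -1/2" and xc: "inner x c \<ge> -1/2"
      by auto
    define al where "al = (1 + 2*inner x a)/3"
    define be where "be = (1 + 2*inner x b)/3"
    define ga where "ga = (1 + 2*inner x c)/3"
    have cdef: "c = -a - b" using assms(4) by (simp add: algebra_simps eq_neg_iff_add_eq_0)
    have xc': "inner x c = - inner x a - inner x b" unfolding cdef by (simp add: inner_diff_right)
    define y where "y = al *\<^sub>R a + be *\<^sub>R b + ga *\<^sub>R c - x"
    have ya: "inner y a = 0"
      unfolding y_def al_def be_def ga_def xc' using aa sym assms(5-7)
      by (simp add: inner_diff_left inner_add_left algebra_simps inner_commute[of x]) (simp add: field_simps)
    have yb: "inner y b = 0"
      unfolding y_def al_def be_def ga_def xc' using aa sym assms(5-7)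
      by (simp add: inner_diff_left inner_add_left algebra_simps inner_commute[of x]) (simp add: field_simps)
    have "y = 0" by (rule perp2[OF ya yb cr_nz[OF assms(1,2,5)]])
    hence xe: "x = al *\<^sub>R a + be *\<^sub>R b + ga *\<^sub>R c" unfolding y_def by simp
    have s: "al + be + ga = 1" unfolding al_def be_def ga_def xc' by (simp add: field_simps)
    show "x \<in> convex hull {a,b,c}" unfolding convex_hull_3
      using xa xb xc s xe unfolding al_def be_def ga_def by force
  qed
qed

lemma small_pert:
  fixes U :: "(real\<times>real) set" and p d :: "real\<times>real"
  assumes "finite U" "\<forall>v\<in>U. inner p v \<le> 1/2" "\<forall>v\<in>U. inner p v = 1/2 \<longrightarrow> inner d v = 0"
  shows "\<exists>e>0. \<forall>v\<in>U. inner (p + e *\<^sub>R d) v \<le> 1/2 \<and> inner (p - e *\<^sub>R d) v \<le> 1/2"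
proof -
  have "\<forall>v\<in>U. eventually (\<lambda>e. inner (p + e *\<^sub>R d) v \<le> 1/2 \<and> inner (p - e *\<^sub>R d) v \<le> 1/2) (at_right (0::real))"
  proof
    fix v assume v: "v \<in> U"
    show "eventually (\<lambda>e. inner (p + e *\<^sub>R d) v \<le> 1/2 \<and> inner (p - e *\<^sub>R d) v \<le> 1/2) (at_right (0::real))"
    proof (cases "inner p v = 1/2")
      case True
      hence "inner d v = 0" using assms(3) v by auto
      hence "\<forall>e. inner (p + e *\<^sub>R d) v \<le> 1/2 \<and> inner (p - e *\<^sub>R d) v \<le> 1/2"
        using True by (simp add: inner_add_left inner_diff_left)
      thus ?thesis by simp
    next
      case False
      hence lt: "inner p v < 1/2" using assms(2) v by force
      have t1: "((\<lambda>e. inner (p + e *\<^sub>R d) v) \<longlongrightarrow> inner p v) (at_right (0::real))"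
        by (intro tendsto_eq_intros) auto
      have t2: "((\<lambda>e. inner (p - e *\<^sub>R d) v) \<longlongrightarrow> inner p v) (at_right (0::real))"
        by (intro tendsto_eq_intros) auto
      have "eventually (\<lambda>e. inner (p + e *\<^sub>R d) v < 1/2) (at_right (0::real))"
        by (rule order_tendstoD(2)[OF t1 lt])
      moreover have "eventually (\<lambda>e. inner (p - e *\<^sub>R d) v < 1/2) (at_right (0::real))"
        by (rule order_tendstoD(2)[OF t2 lt])
      ultimately show ?thesis by eventually_elim auto
    qed
  qed
  hence "eventually (\<lambda>e. \<forall>v\<in>U. inner (p + e *\<^sub>R d) v \<le> 1/2 \<and> inner (p - e *\<^sub>R d) v \<le> 1/2) (at_right (0::real))"
    by (rule eventually_ball_finite[OF assms(1)])
  hence "eventually (\<lambda>e. e > 0 \<and> (\<forall>v\<in>U. inner (p + e *\<^sub>R d) v \<le> 1/2 \<and> inner (p - e *\<^sub>R d) v \<le> 1/2)) (at_right (0::real))"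
    using eventually_at_right_less[of "0::real"] by eventually_elim auto
  from eventually_happens'[OF _ this] show ?thesis by auto
qed

definition rot :: "real\<times>real \<Rightarrow> real\<times>real" where
  "rot u = (- snd u, fst u)"

lemma rot_props: "inner (rot u) u = 0" "inner u (rot u) = 0" "norm (rot u) = norm u"
  by (simp_all add: rot_def inner_xy norm_prod_def)

lemma unit_eq: fixes u v :: "real\<times>real"
  assumes "norm u = 1" "norm v = 1" "inner u v = 1" shows "u = v"
proof -
  have "(norm (u - v))^2 = inner u u - 2 * inner u v + inner v v"
    by (simp add: power2_norm_eq_inner inner_diff_left inner_diff_right inner_commute)
  also have "\<dots> = 0" using assms by (simp add: dot_square_norm)
  finally show ?thesis by simp
qed

lemma active_le2:
  fixes U :: "(real\<times>real) set"
  assumes unit: "\<forall>u\<in>U. norm u = 1"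
  shows "finite {u\<in>U. inner p u = 1/2} \<and> card {u\<in>U. inner p u = 1/2} \<le> 2"
proof -
  have sub: "{u\<in>U. inner p u = 1/2} \<subseteq> {x. norm x = 1 \<and> inner p x = 1/2}" using unit by auto
  have "finite {x. norm x = 1 \<and> inner p x = (1/2::real)} \<and> card {x. norm x = 1 \<and> inner p x = (1/2::real)} \<le> 2"
    by (rule circ_line_le2) simp
  thus ?thesis using card_mono[OF _ sub] finite_subset[OF sub] by auto
qed
lemma mid_pm: fixes p x :: "'a::real_vector" shows "midpoint (p - x) (p + x) = p"
proof -
  have "(p - x) + (p + x) = 2 *\<^sub>R p" by (simp add: scaleR_2 algebra_simps)
  thus ?thesis unfolding midpoint_def by simp
qed

lemma ne_pm: fixes p x :: "'a::real_vector" shows "x \<noteq> 0 \<Longrightarrow> p - x \<noteq> p + x"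
proof
  assume "x \<noteq> 0" "p - x = p + x"
  hence "(p + x) - (p - x) = 0" by simp
  hence "2 *\<^sub>R x = 0" by (simp add: scaleR_2 algebra_simps)
  thus False using \<open>x \<noteq> 0\<close> by simp
qed

lemma active_ge2:
  fixes U :: "(real\<times>real) set"
  assumes fin: "finite U" and unit: "\<forall>u\<in>U. norm u = 1"
    and ext: "p extreme_point_of {x. \<forall>u\<in>U. inner x u \<le> 1/2}"
  shows "2 \<le> card {u\<in>U. inner p u = 1/2}"
proof (rule ccontr)
  let ?P = "{x. \<forall>u\<in>U. inner x u \<le> 1/2}"
  let ?A = "{u\<in>U. inner p u = 1/2}"
  assume "\<not> 2 \<le> card ?A"
  hence c1: "card ?A \<le> Suc 0" by linarith
  have finA: "finite ?A" using fin by simp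
  have all: "\<forall>x\<in>?A. \<forall>y\<in>?A. x = y" using c1 card_le_Suc0_iff_eq[OF finA] by blast
  have "\<exists>u0. norm u0 = 1 \<and> ?A \<subseteq> {u0}"
  proof (cases "?A = {}")
    case True
    have "norm ((1::real),(0::real)) = 1" by (simp add: norm_prod_def)
    thus ?thesis using True by blast
  next
    case False then obtain u where u: "u \<in> ?A" by blast
    have "norm u = 1" using u unit by simp
    moreover have "?A \<subseteq> {u}" using all u by blast
    ultimately show ?thesis by blast
  qed
  then obtain u0 where u0: "norm u0 = 1" "?A \<subseteq> {u0}" by blast
  define d where "d = rot u0"
  have pP: "p \<in> ?P" using ext by (simp add: extreme_point_of_def)
  have "\<forall>v\<in>U. inner p v = 1/2 \<longrightarrow> inner d v = 0"
  proof (intro ballI impI)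
    fix v assume "v \<in> U" "inner p v = 1/2"
    hence "v = u0" using u0(2) by blast
    thus "inner d v = 0" unfolding d_def by (simp add: rot_props)
  qed
  hence ex: "\<exists>e>0. \<forall>v\<in>U. inner (p + e *\<^sub>R d) v \<le> 1/2 \<and> inner (p - e *\<^sub>R d) v \<le> 1/2"
    using small_pert[OF fin, of p d] pP by simp
  then obtain e where e: "e > 0" "\<forall>v\<in>U. inner (p + e *\<^sub>R d) v \<le> 1/2 \<and> inner (p - e *\<^sub>R d) v \<le> 1/2"
    by blast
  have m1: "p + e *\<^sub>R d \<in> ?P" "p - e *\<^sub>R d \<in> ?P" using e(2) by simp_all
  have "norm d = 1" using u0 rot_props(3)[of u0] unfolding d_def by simp
  hence "d \<noteq> 0" by auto
  hence "e *\<^sub>R d \<noteq> 0" using e(1) by simp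
  hence ne: "p - e *\<^sub>R d \<noteq> p + e *\<^sub>R d" by (rule ne_pm)
  have "midpoint (p - e *\<^sub>R d) (p + e *\<^sub>R d) = p" by (rule mid_pm)
  hence mem: "p \<in> open_segment (p - e *\<^sub>R d) (p + e *\<^sub>R d)" using midpoint_in_open_segment[of "p - e *\<^sub>R d" "p + e *\<^sub>R d"] ne by simp
  have allP: "\<forall>a\<in>?P. \<forall>b\<in>?P. p \<notin> open_segment a b" using ext unfolding extreme_point_of_def by blast
  have "p \<notin> open_segment (p - e *\<^sub>R d) (p + e *\<^sub>R d)" by (rule bspec[OF bspec[OF allP m1(2)] m1(1)])
  thus False using mem by contradiction
qed

lemma seg_image:
  fixes c w :: "'a::real_vector" and s1 s2 :: real
  assumes "s1 \<le> s2"
  shows "(\<lambda>s. c + s *\<^sub>R w) ` {s1..s2} = closed_segment (c + s1 *\<^sub>R w) (c + s2 *\<^sub>R w)"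
proof -
  have lin: "linear (\<lambda>s::real. s *\<^sub>R w)" by (rule linear_scaleR_left)
  have "closed_segment (c + s1 *\<^sub>R w) (c + s2 *\<^sub>R w) = (\<lambda>x. c + x) ` closed_segment (s1 *\<^sub>R w) (s2 *\<^sub>R w)"
    by (rule closed_segment_translation)
  also have "closed_segment (s1 *\<^sub>R w) (s2 *\<^sub>R w) = (\<lambda>s. s *\<^sub>R w) ` closed_segment s1 s2"
    by (rule closed_segment_linear_image[OF lin])
  also have "closed_segment s1 s2 = {s1..s2}" using assms by (simp add: closed_segment_eq_real_ivl)
  finally show ?thesis by (simp add: image_image)
qed

lemma decomp:
  fixes u x :: "real\<times>real"
  assumes "norm u = 1" "inner u x = 1/2"
  shows "x = (1/2) *\<^sub>R u + (inner x (rot u)) *\<^sub>R rot u"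
proof -
  obtain u1 u2 where u: "u = (u1,u2)" by (cases u)
  obtain x1 x2 where x: "x = (x1,x2)" by (cases x)
  have h: "u1*u1+u2*u2 = 1" using assms(1) u by (simp add: norm1_xy power2_eq_square)
  have k: "u1*x1+u2*x2 = 1/2" using assms(2) u x by (simp add: inner_xy)
  have e1: "x1 = (u1*x1+u2*x2)*u1 + (x2*u1 - x1*u2)*(-u2)"
  proof -
    have "(u1*x1+u2*x2)*u1 + (x2*u1 - x1*u2)*(-u2) = x1*(u1*u1+u2*u2)" by (simp add: algebra_simps)
    thus ?thesis using h by simp
  qed
  have e2: "x2 = (u1*x1+u2*x2)*u2 + (x2*u1 - x1*u2)*u1"
  proof -
    have "(u1*x1+u2*x2)*u2 + (x2*u1 - x1*u2)*u1 = x2*(u1*u1+u2*u2)" by (simp add: algebra_simps)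
    thus ?thesis using h by simp
  qed
  show ?thesis using e1 e2 unfolding k u x by (simp add: rot_def inner_xy algebra_simps)
qed

lemma face_two:
  fixes U :: "(real\<times>real) set"
  assumes fin: "finite U" and unit: "\<forall>v\<in>U. norm v = 1" and uU: "u \<in> U"
    and bnd: "{x. \<forall>v\<in>U. inner x v \<le> 1/2} \<subseteq> cball 0 1"
  shows "finite {p. p extreme_point_of {x. \<forall>v\<in>U. inner x v \<le> 1/2} \<and> inner p u = 1/2}
       \<and> card {p. p extreme_point_of {x. \<forall>v\<in>U. inner x v \<le> 1/2} \<and> inner p u = 1/2} = 2"
proof -
  let ?P = "{x. \<forall>v\<in>U. inner x v \<le> 1/2}"
  define w where "w = rot u"
  define f where "f = (\<lambda>s::real. (1/2) *\<^sub>R u + s *\<^sub>R w)"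
  have nu: "norm u = 1" using unit uU by simp
  have uu: "inner u u = 1" using nu by (simp add: dot_square_norm)
  have uw: "inner u w = 0" "inner w u = 0" unfolding w_def by (simp_all add: rot_props)
  have ww: "inner w w = 1" using nu rot_props(3)[of u] unfolding w_def by (simp add: dot_square_norm)
  have Peq: "?P = (\<Inter>v\<in>U. {x. inner x v \<le> 1/2})" by blast
  have cP: "convex ?P" unfolding Peq by (intro convex_INT ballI conv_hp)
  let ?F = "?P \<inter> {x. inner u x = 1/2}"
  have face: "?F face_of ?P"
    by (rule face_of_Int_supporting_hyperplane_le[OF cP]) (use uU in \<open>auto simp: inner_commute\<close>)
  have exteq: "{p. p extreme_point_of ?P \<and> inner p u = 1/2} = {p. p extreme_point_of ?F}"
  proof -
    have "p extreme_point_of ?F \<longleftrightarrow> p extreme_point_of ?P \<and> inner p u = 1/2" for p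
    proof
      assume a: "p extreme_point_of ?F"
      hence b: "p extreme_point_of ?P" and "p \<in> ?F" using extreme_point_of_face[OF face, of p] by simp_all
      hence "inner u p = 1/2" by (simp only: Int_iff mem_Collect_eq)
      thus "p extreme_point_of ?P \<and> inner p u = 1/2" using b by (simp add: inner_commute)
    next
      assume a: "p extreme_point_of ?P \<and> inner p u = 1/2"
      hence "p \<in> ?P" unfolding extreme_point_of_def by blast
      moreover have "inner u p = 1/2" using a by (simp add: inner_commute)
      ultimately have "p \<in> ?F" by (simp only: Int_iff mem_Collect_eq)
      thus "p extreme_point_of ?F" using a extreme_point_of_face[OF face, of p] by simp
    qed
    thus ?thesis by blast
  qed
  define I where "I = {s. f s \<in> ?P}"
  have fin_inner: "inner (f s) v = (1/2) * inner u v + s * inner w v" for s v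
    unfolding f_def by (simp add: inner_add_left)
  have Ieq: "I = (\<Inter>v\<in>U. {s. inner (inner w v) s \<le> 1/2 - (1/2) * inner u v})"
    unfolding I_def by (auto simp: fin_inner algebra_simps)
  have clI: "closed I" unfolding Ieq by (intro closed_INT ballI closed_halfspace_le)
  have cvI: "convex I" unfolding Ieq by (intro convex_INT ballI convex_halfspace_le)
  have fsq: "inner (f s) (f s) = 1/4 + s^2" for s
    unfolding f_def using uu uw ww
    by (simp add: inner_add_left inner_add_right power2_eq_square)
  have bI: "I \<subseteq> {-1..1}"
  proof
    fix s assume "s \<in> I"
    hence "f s \<in> cball 0 1" using bnd unfolding I_def by blast
    hence "norm (f s) \<le> 1" by simp
    hence "(norm (f s))^2 \<le> 1" by (simp add: power_le_one)
    hence "1/4 + s^2 \<le> 1" using fsq[of s] by (simp add: power2_norm_eq_inner)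
    hence "s^2 \<le> 1" by simp
    hence "\<bar>s\<bar> \<le> 1" by (simp add: abs_square_le_1)
    thus "s \<in> {-1..1}" by (simp add: abs_le_iff)
  qed
  have "compact I" using clI bI by (metis bounded_closed_interval bounded_subset compact_eq_bounded_closed)
  moreover have "connected I" using cvI by (rule convex_connected)
  ultimately obtain s1 s2 where Iint: "I = {s1..s2}" using connected_compact_interval_1 by blast
  have pre: "\<forall>v\<in>U. inner ((1/2) *\<^sub>R u) v = 1/2 \<longrightarrow> inner w v = 0"
  proof (intro ballI impI)
    fix v assume v: "v \<in> U" "inner ((1/2) *\<^sub>R u) v = 1/2"
    hence "inner u v = 1" by simp
    hence "u = v" using unit_eq[OF nu] v unit by blast
    thus "inner w v = 0" using uw by simp
  qed
  have pre2: "\<forall>v\<in>U. inner ((1/2) *\<^sub>R u) v \<le> 1/2"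
  proof
    fix v assume "v \<in> U"
    hence "inner u v \<le> 1" using norm_cauchy_schwarz[of u v] nu unit by simp
    thus "inner ((1/2) *\<^sub>R u) v \<le> 1/2" by simp
  qed
  obtain e where e: "e > 0" "\<forall>v\<in>U. inner ((1/2) *\<^sub>R u + e *\<^sub>R w) v \<le> 1/2 \<and> inner ((1/2) *\<^sub>R u - e *\<^sub>R w) v \<le> 1/2"
    using small_pert[OF fin pre2 pre] by blast
  have "e \<in> I" using e(2) unfolding I_def f_def by simp
  moreover have "-e \<in> I" using e(2) unfolding I_def f_def by (simp add: algebra_simps)
  ultimately have s12: "s1 < s2" using e(1) unfolding Iint by simp
  have Feq: "?F = f ` I"
  proof
    show "?F \<subseteq> f ` I"
    proof
      fix x assume x: "x \<in> ?F"
      hence "x = f (inner x w)" unfolding f_def w_def using decomp[OF nu] by auto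
      moreover hence "inner x w \<in> I" using x unfolding I_def by auto
      ultimately show "x \<in> f ` I" by blast
    qed
    show "f ` I \<subseteq> ?F"
    proof
      fix x assume "x \<in> f ` I"
      then obtain s where s: "s \<in> I" "x = f s" by blast
      have "inner u (f s) = 1/2" unfolding f_def using uu uw by (simp add: inner_add_right)
      thus "x \<in> ?F" using s unfolding I_def by simp
    qed
  qed
  have Fseg: "?F = closed_segment (f s1) (f s2)"
    unfolding Feq Iint f_def using seg_image[of s1 s2 "(1/2) *\<^sub>R u" w] s12 by simp
  have fw: "inner (f s) w = s" for s unfolding f_def using uw ww by (simp add: inner_add_left)
  have ne: "f s1 \<noteq> f s2" using fw[of s1] fw[of s2] s12 by auto
  have "{p. p extreme_point_of ?F} = {f s1, f s2}"
    unfolding Fseg by (auto simp: extreme_point_of_segment)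
  thus ?thesis unfolding exteq using ne by simp
qed

lemma card_filter_sum:
  assumes "finite A"
  shows "card {x\<in>A. Q x} = (\<Sum>x\<in>A. if Q x then 1 else 0 :: nat)"
proof -
  have "(\<Sum>x\<in>A. if Q x then 1 else 0 :: nat) = (\<Sum>x\<in>{x\<in>A. Q x}. 1)"
    using sum.inter_filter[OF assms, of "\<lambda>_. 1::nat" Q] by simp
  thus ?thesis by simp
qed

lemma count_vertices:
  fixes U :: "(real\<times>real) set"
  assumes fin: "finite U" and unit: "\<forall>v\<in>U. norm v = 1"
    and bnd: "{x. \<forall>v\<in>U. inner x v \<le> 1/2} \<subseteq> cball 0 1"
  shows "card {p. p extreme_point_of {x. \<forall>v\<in>U. inner x v \<le> 1/2}} = card U"
proof -
  let ?P = "{x. \<forall>v\<in>U. inner x v \<le> 1/2}"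
  define V where "V = {p. p extreme_point_of ?P}"
  have Eu: "\<And>u. u \<in> U \<Longrightarrow> finite {p\<in>V. inner p u = 1/2} \<and> card {p\<in>V. inner p u = 1/2} = 2"
    using face_two[OF fin unit _ bnd] unfolding V_def by simp
  have Vsub: "V \<subseteq> (\<Union>u\<in>U. {p\<in>V. inner p u = 1/2})"
  proof
    fix p assume p: "p \<in> V"
    hence "2 \<le> card {u\<in>U. inner p u = 1/2}" using active_ge2[OF fin unit] unfolding V_def by simp
    hence "{u\<in>U. inner p u = 1/2} \<noteq> {}" by (metis card.empty not_numeral_le_zero)
    then obtain u where "u \<in> U" "inner p u = 1/2" by blast
    thus "p \<in> (\<Union>u\<in>U. {p\<in>V. inner p u = 1/2})" using p by blast
  qed
  have finV: "finite V" by (rule finite_subset[OF Vsub]) (use fin Eu in blast)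
  have Ap: "\<And>p. p \<in> V \<Longrightarrow> card {u\<in>U. inner p u = 1/2} = 2"
  proof -
    fix p assume "p \<in> V"
    hence "2 \<le> card {u\<in>U. inner p u = 1/2}" using active_ge2[OF fin unit] unfolding V_def by simp
    moreover have "card {u\<in>U. inner p u = 1/2} \<le> 2" using active_le2[OF unit] by blast
    ultimately show "card {u\<in>U. inner p u = 1/2} = 2" by simp
  qed
  have "(\<Sum>p\<in>V. card {u\<in>U. inner p u = 1/2}) = (\<Sum>p\<in>V. \<Sum>u\<in>U. if inner p u = 1/2 then 1 else 0)"
    using card_filter_sum[OF fin] by simp
  also have "\<dots> = (\<Sum>u\<in>U. \<Sum>p\<in>V. if inner p u = 1/2 then 1 else 0)" by (rule sum.swap)
  also have "\<dots> = (\<Sum>u\<in>U. card {p\<in>V. inner p u = 1/2})"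
    using card_filter_sum[OF finV] by simp
  finally have "(\<Sum>p\<in>V. card {u\<in>U. inner p u = 1/2}) = (\<Sum>u\<in>U. card {p\<in>V. inner p u = 1/2})" .
  moreover have "(\<Sum>p\<in>V. card {u\<in>U. inner p u = 1/2}) = 2 * card V" using Ap by simp
  moreover have "(\<Sum>u\<in>U. card {p\<in>V. inner p u = 1/2}) = 2 * card U" using Eu by simp
  ultimately show ?thesis unfolding V_def by simp
qed

lemma tri_set1:
  fixes a b c :: "real\<times>real"
  assumes "norm a = 1" "norm b = 1" "norm c = 1"
    "inner a b = -1/2" "inner b c = -1/2" "inner a c = -1/2"
  shows "{a,b,c} = insert a {x. norm x = 1 \<and> inner a x = -1/2}"
proof -
  let ?S = "{x. norm x = 1 \<and> inner a x = -1/2}"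
  have fS: "finite ?S \<and> card ?S \<le> 2" by (rule circ_line_le2) simp
  have sub: "{b,c} \<subseteq> ?S" using assms by simp
  have bc: "b \<noteq> c"
  proof
    assume "b = c" hence "inner b c = 1" using assms(2) by (simp add: dot_square_norm)
    thus False using assms(5) by simp
  qed
  have "card {b,c} = 2" using bc by simp
  hence "{b,c} = ?S" using card_subset_eq[OF _ sub] fS card_mono[OF _ sub] by (metis le_antisym)
  thus ?thesis by simp
qed

lemma tri_set:
  fixes a b c v :: "real\<times>real"
  assumes "norm a = 1" "norm b = 1" "norm c = 1"
    "inner a b = -1/2" "inner b c = -1/2" "inner c a = -1/2" "v \<in> {a,b,c}"
  shows "{a,b,c} = insert v {x. norm x = 1 \<and> inner v x = -1/2}"
proof -
  have s: "inner b a = -1/2" "inner c b = -1/2" "inner a c = -1/2"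
    using assms(4-6) by (simp_all add: inner_commute)
  consider "v = a" | "v = b" | "v = c" using assms(7) by blast
  thus ?thesis
  proof cases
    case 1 thus ?thesis using tri_set1[of a b c] assms s by simp
  next
    case 2
    have "{b,a,c} = insert b {x. norm x = 1 \<and> inner b x = -1/2}"
      using tri_set1[of b a c] assms s by simp
    thus ?thesis using 2 by (simp add: insert_commute)
  next
    case 3
    have "{c,a,b} = insert c {x. norm x = 1 \<and> inner c x = -1/2}"
      using tri_set1[of c a b] assms s by simp
    thus ?thesis using 3 by (simp add: insert_commute)
  qed
qed

lemma C_cball: "C = cball (0::real\<times>real) 1"
proof -
  have "z \<in> C \<longleftrightarrow> z \<in> cball 0 1" for z :: "real\<times>real"
  proof -
    have "z \<in> C \<longleftrightarrow> (fst z)^2 + (snd z)^2 \<le> 1" unfolding C_def Cd_def by (cases z) simp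
    also have "\<dots> \<longleftrightarrow> (norm z)^2 \<le> 1" by (simp add: norm_sq_xy)
    also have "\<dots> \<longleftrightarrow> norm z \<le> 1" by (simp add: abs_square_le_1)
    finally show ?thesis by simp
  qed
  thus ?thesis by blast
qed

lemma frontier_C: "frontier C = sphere (0::real\<times>real) 1"
  unfolding C_cball by simp

theorem mainTheorem12:
  fixes n :: nat and T :: "nat \<Rightarrow> (real \<times> real) set"
  assumes "n \<ge> 2"
    and "\<forall>i\<in>{1..n}. T i \<in> E"
    and "inj_on T {1..n}"
  shows "card (polygon_vertices (\<Inter>i\<in>{1..n}. T i)) = 3 * n"
proof -
  have "\<forall>i\<in>{1..n}. \<exists>t. T i = convex hull {fst t, fst (snd t), snd (snd t)} \<and> fst t \<noteq> fst (snd t) \<and>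
          dist (fst t) (fst (snd t)) = dist (fst (snd t)) (snd (snd t)) \<and>
          dist (fst (snd t)) (snd (snd t)) = dist (snd (snd t)) (fst t) \<and>
          T i \<subseteq> C \<and> fst t \<in> frontier C \<and> fst (snd t) \<in> frontier C \<and> snd (snd t) \<in> frontier C"
  proof
    fix i assume "i \<in> {1..n}"
    hence "T i \<in> E" using assms(2) by blast
    then obtain a b c where h: "T i = convex hull {a, b, c} \<and> a \<noteq> b \<and>
          dist a b = dist b c \<and> dist b c = dist c a \<and>
          T i \<subseteq> C \<and> a \<in> frontier C \<and> b \<in> frontier C \<and> c \<in> frontier C" unfolding E_def by blast
    show "\<exists>t. T i = convex hull {fst t, fst (snd t), snd (snd t)} \<and> fst t \<noteq> fst (snd t) \<and>
          dist (fst t) (fst (snd t)) = dist (fst (snd t)) (snd (snd t)) \<and>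
          dist (fst (snd t)) (snd (snd t)) = dist (snd (snd t)) (fst t) \<and>
          T i \<subseteq> C \<and> fst t \<in> frontier C \<and> fst (snd t) \<in> frontier C \<and> snd (snd t) \<in> frontier C"
      apply (rule exI[of _ "(a,b,c)"]) unfolding fst_conv snd_conv by (rule h)
  qed
  then obtain g where g: "\<forall>i\<in>{1..n}. T i = convex hull {fst (g i), fst (snd (g i)), snd (snd (g i))} \<and> fst (g i) \<noteq> fst (snd (g i)) \<and>
          dist (fst (g i)) (fst (snd (g i))) = dist (fst (snd (g i))) (snd (snd (g i))) \<and>
          dist (fst (snd (g i))) (snd (snd (g i))) = dist (snd (snd (g i))) (fst (g i)) \<and>
          T i \<subseteq> C \<and> fst (g i) \<in> frontier C \<and> fst (snd (g i)) \<in> frontier C \<and> snd (snd (g i)) \<in> frontier C"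
    by (rule bchoice[THEN exE]) blast
  define A where "A i = fst (g i)" for i
  define B where "B i = fst (snd (g i))" for i
  define Cc where "Cc i = snd (snd (g i))" for i
  define N where "N i = {- A i, - B i, - Cc i}" for i
  have tri: "T i = convex hull {A i, B i, Cc i} \<and> A i \<noteq> B i \<and>
          dist (A i) (B i) = dist (B i) (Cc i) \<and> dist (B i) (Cc i) = dist (Cc i) (A i) \<and>
          T i \<subseteq> C \<and> norm (A i) = 1 \<and> norm (B i) = 1 \<and> norm (Cc i) = 1" if "i \<in> {1..n}" for i
    using g[rule_format, OF that] unfolding A_def B_def Cc_def frontier_C mem_sphere_0 by blast
  have facts: "A i + B i + Cc i = 0 \<and> inner (A i) (B i) = -1/2 \<and> inner (B i) (Cc i) = -1/2 \<and> inner (Cc i) (A i) = -1/2"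
    if "i \<in> {1..n}" for i using tri_facts tri[OF that] by blast
  have Ti: "T i = {x. \<forall>u\<in>N i. inner x u \<le> 1/2}" if "i \<in> {1..n}" for i
    using tri_halfplanes[of "A i" "B i" "Cc i"] tri[OF that] facts[OF that] unfolding N_def by simp
  have unitN: "\<forall>u\<in>N i. norm u = 1" if "i \<in> {1..n}" for i
    using tri[OF that] unfolding N_def by simp
  have Nset: "N i = insert v {x. norm x = 1 \<and> inner v x = -1/2}" if "i \<in> {1..n}" "v \<in> N i" for i v
    using tri_set[of "- A i" "- B i" "- Cc i" v] tri[OF that(1)] facts[OF that(1)] that(2) unfolding N_def by simp
  have card3: "card (N i) = 3" if "i \<in> {1..n}" for i
  proof -
    have "inner (A i) (B i) \<noteq> inner (A i) (A i)" "inner (B i) (Cc i) \<noteq> inner (B i) (B i)"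
      "inner (Cc i) (A i) \<noteq> inner (Cc i) (Cc i)"
      using tri[OF that] facts[OF that] by (simp_all add: dot_square_norm)
    hence "A i \<noteq> B i" "B i \<noteq> Cc i" "Cc i \<noteq> A i" by auto
    thus ?thesis unfolding N_def by simp
  qed
  define U where "U = (\<Union>i\<in>{1..n}. N i)"
  have disj: "\<forall>i\<in>{1..n}. \<forall>j\<in>{1..n}. i \<noteq> j \<longrightarrow> N i \<inter> N j = {}"
  proof (intro ballI impI)
    fix i j assume ij: "i \<in> {1..n}" "j \<in> {1..n}" "i \<noteq> j"
    show "N i \<inter> N j = {}"
    proof (rule ccontr)
      assume "N i \<inter> N j \<noteq> {}"
      then obtain v where v: "v \<in> N i" "v \<in> N j" by blast
      have "N i = N j" using Nset[OF ij(1) v(1)] Nset[OF ij(2) v(2)] by (rule trans[OF _ sym])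
      hence "T i = T j" using Ti[OF ij(1)] Ti[OF ij(2)] by simp
      thus False using assms(3) ij by (meson inj_on_def)
    qed
  qed
  have finN: "\<forall>i\<in>{1..n}. finite (N i)" unfolding N_def by simp
  have cardU: "card U = 3 * n"
    unfolding U_def using card_UN_disjoint[OF _ finN disj] card3 by simp
  have finU: "finite U" unfolding U_def using finN by blast
  have unitU: "\<forall>v\<in>U. norm v = 1" unfolding U_def using unitN by blast
  have Pe: "(\<Inter>i\<in>{1..n}. T i) = {x. \<forall>v\<in>U. inner x v \<le> 1/2}"
    unfolding U_def using Ti by auto
  have one: "1 \<in> {1..n}" using assms(1) by simp
  have "(\<Inter>i\<in>{1..n}. T i) \<subseteq> T 1" using one by blast
  also have "T 1 \<subseteq> C" using tri[OF one] by blast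
  finally have bnd: "{x. \<forall>v\<in>U. inner x v \<le> 1/2} \<subseteq> cball 0 1" unfolding Pe C_cball .
  show ?thesis unfolding polygon_vertices_def Pe count_vertices[OF finU unitU bnd] cardU ..
qed

end
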